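(* For every $h\in\widehat{\operatorname{PC}^{\bowtie}}$ and every order-preserving homeomorphism $\phi$ of $[0,1[$, one has $\varepsilon(h\phi)=\varepsilon(h)=\varepsilon(\phi h)$.
   Context: $X=[0,1[$; $\widehat{\operatorname{PC}^{\bowtie}}$ is the group of bijections $X\to X$ continuous outside a finite subset, containing the group ${\mathfrak S}_{\mathrm{fin}}$ of finitely supported permutations with classical signature $\operatorname{sgn}$ valued in $\mathbb{Z}/2\mathbb{Z}$. For $h\in\widehat{\operatorname{PC}^{\bowtie}}$, a partition associated with $h$ is a finite partition $\mathcal P=\{I_1,\dots,I_n\}$ of $X$ into intervals $I_j=[\alpha_j,b_j[$ such that $h$ is continuous on $I_j^\circ=]\alpha_j,b_j[$ for each $j$ (so $h$ is strictly monotone there and $h(I_j^\circ)$ is an open interval). Let $\beta_j$ be the left endpoint of $h(I_j^\circ)$; $\{h(\alpha_j)\}=\{\beta_j\}$, and $\sigma_{(h,\mathcal P)}\in{\mathfrak S}_{\mathrm{fin}}$ sends $h(\alpha_j)$ to $\beta_j$ for each $j$ and fixes all other points. $R(h,\mathcal P)$ is the number of $j$ with $h$ decreasing on $I_j^\circ$, and $\varepsilon(h,\mathcal P)=R(h,\mathcal P)+\operatorname{sgn}(\sigma_{(h,\mathcal P)})\bmod 2$. There is a unique associated partition $\mathcal P^{\min}_h$ with the fewest intervals, every associated partition refines it, and $\varepsilon(h):=\varepsilon(h,\mathcal P^{\min}_h)$. *)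

theory Defs
  imports "HOL-Analysis.Analysis" "HOL-Combinatorics.Permutations"
begin

definition Xs :: "real set" where "Xs = {0..<1}"

definition PCbow :: "(real \<Rightarrow> real) \<Rightarrow> bool" where
  "PCbow h \<longleftrightarrow> bij_betw h Xs Xs \<and>
     (\<exists>F. finite F \<and> (\<forall>x\<in>Xs - F. continuous (at x within Xs) h))"

text \<open>A finite partition of X into intervals [a,b[ is encoded by the finite set P of
  left endpoints (0 \<in> P, P \<subseteq> X); the interval starting at a \<in> P ends at the next
  point of P, or at 1.\<close>
definition nxt :: "real set \<Rightarrow> real \<Rightarrow> real" where
  "nxt P a = (if \<exists>p\<in>P. a < p then Min {p\<in>P. a < p} else 1)"

definition is_partition :: "real set \<Rightarrow> bool" where
  "is_partition P \<longleftrightarrow> finite P \<and> 0 \<in> P \<and> P \<subseteq> Xs"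

definition assoc_partition :: "(real \<Rightarrow> real) \<Rightarrow> real set \<Rightarrow> bool" where
  "assoc_partition h P \<longleftrightarrow> is_partition P \<and>
     (\<forall>a\<in>P. continuous_on {a<..<nxt P a} h)"

definition beta_pt :: "(real \<Rightarrow> real) \<Rightarrow> real set \<Rightarrow> real \<Rightarrow> real" where
  "beta_pt h P a = Inf (h ` {a<..<nxt P a})"

definition sigma_hP :: "(real \<Rightarrow> real) \<Rightarrow> real set \<Rightarrow> real \<Rightarrow> real" where
  "sigma_hP h P x = (if x \<in> h ` P then beta_pt h P (THE a. a \<in> P \<and> h a = x) else x)"

definition R_hP :: "(real \<Rightarrow> real) \<Rightarrow> real set \<Rightarrow> nat" where
  "R_hP h P = card {a\<in>P. \<forall>x y. a < x \<longrightarrow> x < y \<longrightarrow> y < nxt P a \<longrightarrow> h y < h x}"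

definition sgn2 :: "(real \<Rightarrow> real) \<Rightarrow> nat" where
  "sgn2 s = (if evenperm s then 0 else 1)"

definition eps_hP :: "(real \<Rightarrow> real) \<Rightarrow> real set \<Rightarrow> nat" where
  "eps_hP h P = (R_hP h P + sgn2 (sigma_hP h P)) mod 2"

definition Pmin :: "(real \<Rightarrow> real) \<Rightarrow> real set" where
  "Pmin h = (THE P. assoc_partition h P \<and> (\<forall>Q. assoc_partition h Q \<longrightarrow> card P \<le> card Q))"

definition eps :: "(real \<Rightarrow> real) \<Rightarrow> nat" where
  "eps h = eps_hP h (Pmin h)"

end

theory Submission
  imports Defs
begin


lemma swapidseq_conj:
  assumes "swapidseq n p" "bij g"
  shows "swapidseq n (g \<circ> p \<circ> inv g)"
  using assms(1)
proof induction
  case id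
  then show ?case using assms(2) by (simp add: fun_eq_iff bij_is_surj surj_f_inv_f)
next
  case (comp_Suc n p a b)
  have e: "g \<circ> (Transposition.transpose a b \<circ> p) \<circ> inv g = Transposition.transpose (g a) (g b) \<circ> (g \<circ> p \<circ> inv g)"
  proof
    fix x
    have "g (Transposition.transpose a b y) = Transposition.transpose (g a) (g b) (g y)" for y
      using assms(2) unfolding Transposition.transpose_def by (auto simp: bij_def inj_eq)
    then show "(g \<circ> (Transposition.transpose a b \<circ> p) \<circ> inv g) x = (Transposition.transpose (g a) (g b) \<circ> (g \<circ> p \<circ> inv g)) x"
      by simp
  qed
  have "g a \<noteq> g b" using comp_Suc(2) assms(2) by (auto simp: bij_def inj_eq)
  then show ?case unfolding e using swapidseq.comp_Suc[OF comp_Suc(3)] by blast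
qed

lemma evenperm_conj:
  assumes "bij g" "s' \<circ> g = g \<circ> s"
  shows "evenperm s' = evenperm s"
proof -
  have s': "s' = g \<circ> s \<circ> inv g"
    using assms by (metis bij_is_surj comp_assoc comp_id surj_iff)
  have s: "s = inv g \<circ> s' \<circ> inv (inv g)"
    using assms by (simp add: s' fun_eq_iff bij_is_inj inv_inv_eq bij_inv_eq_iff)
  have "swapidseq n s' = swapidseq n s" for n
    using swapidseq_conj[of n s g] swapidseq_conj[of n s' "inv g"] assms(1) s s'
    by (metis bij_imp_bij_inv)
  then show ?thesis unfolding evenperm_def by simp
qed


definition Cd :: "(real \<Rightarrow> real) \<Rightarrow> real set" where
  "Cd h = {x. 0 < x \<and> x < 1 \<and> \<not> isCont h x}"

definition J :: "real set \<Rightarrow> real \<Rightarrow> real set" where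
  "J P a = {a<..<nxt P a}"

lemma nxt_char:
  assumes "finite P" "P \<subseteq> Xs"
  shows "x \<in> J P a \<longleftrightarrow> (a < x \<and> x < 1 \<and> (\<forall>p\<in>P. a < p \<longrightarrow> x < p))"
proof (cases "\<exists>p\<in>P. a < p")
  case True
  then obtain p0 where p0: "p0 \<in> P" "a < p0" by blast
  have fin: "finite {p\<in>P. a < p}" using assms by simp
  have ne: "{p\<in>P. a < p} \<noteq> {}" using p0 by blast
  have "x < nxt P a \<longleftrightarrow> (\<forall>p\<in>P. a < p \<longrightarrow> x < p)"
    using True Min_gr_iff[OF fin ne, of x] unfolding nxt_def by auto
  moreover have "p0 < 1" using p0 assms unfolding Xs_def by auto
  ultimately show ?thesis unfolding J_def using p0 by auto
next
  case False
  then show ?thesis unfolding J_def nxt_def by auto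
qed

lemma J_sub:
  assumes "is_partition P" "a \<in> P"
  shows "J P a \<subseteq> Xs"
  using assms nxt_char[of P _ a] unfolding is_partition_def Xs_def by auto

lemma J_ne:
  assumes "is_partition P" "a \<in> P"
  shows "J P a \<noteq> {}"
proof -
  have "a < nxt P a"
  proof (cases "\<exists>p\<in>P. a < p")
    case True
    have fin: "finite {p\<in>P. a < p}" using assms unfolding is_partition_def by simp
    show ?thesis using True Min_gr_iff[OF fin, of a] unfolding nxt_def by auto
  next
    case False
    then show ?thesis using assms unfolding nxt_def is_partition_def Xs_def by auto
  qed
  then show ?thesis unfolding J_def by auto
qed

lemma assoc_char:
  assumes "is_partition P"
  shows "assoc_partition h P \<longleftrightarrow> Cd h \<subseteq> P"
proof
  assume A: "assoc_partition h P"
  show "Cd h \<subseteq> P"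
  proof
    fix x assume x: "x \<in> Cd h"
    show "x \<in> P"
    proof (rule ccontr)
      assume nx: "x \<notin> P"
      have fin: "finite {p\<in>P. p < x}" using assms unfolding is_partition_def by simp
      have ne: "{p\<in>P. p < x} \<noteq> {}" using assms x unfolding is_partition_def Cd_def by auto
      define a where "a = Max {p\<in>P. p < x}"
      have aP: "a \<in> P" and ax: "a < x" using Max_in[OF fin ne] unfolding a_def by auto
      have "x \<in> J P a"
      proof (subst nxt_char)
        show "finite P" "P \<subseteq> Xs" using assms unfolding is_partition_def by auto
        have "\<forall>p\<in>P. a < p \<longrightarrow> x < p"
        proof (intro ballI impI)
          fix p assume "p \<in> P" "a < p"
          show "x < p"
          proof (rule ccontr)
            assume "\<not> x < p"
            then have "p < x" using nx \<open>p \<in> P\<close> by (cases "p = x") auto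
            then have "p \<le> a" unfolding a_def using fin \<open>p \<in> P\<close> by auto
            then show False using \<open>a < p\<close> by simp
          qed
        qed
        then show "a < x \<and> x < 1 \<and> (\<forall>p\<in>P. a < p \<longrightarrow> x < p)" using ax x unfolding Cd_def by auto
      qed
      moreover have "continuous_on (J P a) h" using A aP unfolding assoc_partition_def J_def by auto
      ultimately have "isCont h x" using continuous_on_eq_continuous_at[of "J P a" h]
        unfolding J_def by auto
      then show False using x unfolding Cd_def by auto
    qed
  qed
next
  assume C: "Cd h \<subseteq> P"
  have "continuous_on (J P a) h" if aP: "a \<in> P" for a
  proof -
    have "isCont h x" if x: "x \<in> J P a" for x
    proof -
      have "a < x" "x < 1" "\<forall>p\<in>P. a < p \<longrightarrow> x < p"
        using x nxt_char[of P x a] assms unfolding is_partition_def by auto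
      moreover have "0 \<le> a" using aP assms unfolding is_partition_def Xs_def by auto
      ultimately have "x \<notin> P" "0 < x" by auto
      then show ?thesis using C \<open>x < 1\<close> unfolding Cd_def by auto
    qed
    then show ?thesis using continuous_on_eq_continuous_at[of "J P a" h] unfolding J_def by auto
  qed
  then show "assoc_partition h P" using assms unfolding assoc_partition_def J_def by auto
qed

lemma Pmin_char:
  assumes "finite (Cd h)"
  shows "Pmin h = insert 0 (Cd h)"
proof -
  let ?P = "insert 0 (Cd h)"
  have part: "is_partition ?P" using assms unfolding is_partition_def Cd_def Xs_def by auto
  have aP: "assoc_partition h ?P" using assoc_char[OF part] by auto
  have sub: "?P \<subseteq> Q" if "assoc_partition h Q" for Q
    using that assoc_char[of Q h] unfolding assoc_partition_def is_partition_def by auto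
  show ?thesis unfolding Pmin_def
  proof (rule the_equality)
    show "assoc_partition h ?P \<and> (\<forall>Q. assoc_partition h Q \<longrightarrow> card ?P \<le> card Q)"
      using aP sub by (auto intro: card_mono simp: assoc_partition_def is_partition_def)
  next
    fix Q assume Q: "assoc_partition h Q \<and> (\<forall>Q'. assoc_partition h Q' \<longrightarrow> card Q \<le> card Q')"
    then have "card Q \<le> card ?P" "?P \<subseteq> Q" "finite Q" using aP sub
      unfolding assoc_partition_def is_partition_def by auto
    then show "Q = ?P" using card_subset_eq[of Q ?P] by (metis antisym card_mono)
  qed
qed

lemma PC_finite:
  assumes "PCbow h" shows "finite (Cd h)"
proof -
  obtain F where F: "finite F" "\<forall>x\<in>Xs - F. continuous (at x within Xs) h"
    using assms unfolding PCbow_def by auto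
  have "Cd h \<subseteq> F"
  proof
    fix x assume x: "x \<in> Cd h"
    show "x \<in> F"
    proof (rule ccontr)
      assume "x \<notin> F"
      then have "continuous (at x within Xs) h" using F x unfolding Cd_def Xs_def by auto
      then have "continuous (at x within {0<..<1}) h"
        by (rule continuous_within_subset) (auto simp: Xs_def)
      then have "isCont h x" using x at_within_open[of x "{0<..<1::real}"] unfolding Cd_def by auto
      then show False using x unfolding Cd_def by auto
    qed
  qed
  then show ?thesis using F finite_subset by auto
qed


locale phictx =
  fixes \<phi> \<psi> :: "real \<Rightarrow> real"
  assumes hom: "homeomorphism Xs Xs \<phi> \<psi>" and sm: "strict_mono_on Xs \<phi>"
begin

lemma phiX: "x \<in> Xs \<Longrightarrow> \<phi> x \<in> Xs" and psiX: "x \<in> Xs \<Longrightarrow> \<psi> x \<in> Xs"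
  and psiphi: "x \<in> Xs \<Longrightarrow> \<psi> (\<phi> x) = x" and phipsi: "x \<in> Xs \<Longrightarrow> \<phi> (\<psi> x) = x"
  and cphi: "continuous_on Xs \<phi>" and cpsi: "continuous_on Xs \<psi>"
  using hom unfolding homeomorphism_def by auto

lemma phi_less: "x \<in> Xs \<Longrightarrow> y \<in> Xs \<Longrightarrow> \<phi> x < \<phi> y \<longleftrightarrow> x < y"
  using strict_mono_on_less[OF sm] by auto

lemma psi_less: "x \<in> Xs \<Longrightarrow> y \<in> Xs \<Longrightarrow> \<psi> x < \<psi> y \<longleftrightarrow> x < y"
  by (metis phi_less phipsi psiX)

lemma psi0: "\<psi> 0 = 0"
proof -
  have "0 \<in> Xs" unfolding Xs_def by auto
  then have "\<psi> 0 \<in> Xs" "\<phi> (\<psi> 0) = 0" using psiX phipsi by auto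
  moreover have "\<phi> 0 \<in> Xs" using phiX \<open>0 \<in> Xs\<close> by auto
  ultimately show ?thesis using phi_less[of 0 "\<psi> 0"] \<open>0 \<in> Xs\<close> unfolding Xs_def by force
qed

lemma open01: "open {0<..<1::real}" by simp
lemma sub01: "{0<..<1::real} \<subseteq> Xs" unfolding Xs_def by auto

lemma isCont_XsC:
  assumes "continuous_on Xs g" "x \<in> Xs" "0 < x"
  shows "isCont g x"
proof -
  have "x \<in> {0<..<1}" using assms unfolding Xs_def by auto
  moreover have "continuous_on {0<..<1} g" using continuous_on_subset[OF assms(1) sub01] .
  ultimately show ?thesis using continuous_on_eq_continuous_at[OF open01, of g] by blast
qed

lemma comp_cont:
  fixes f g :: "real \<Rightarrow> real"
  assumes "isCont f x" "x \<in> {0<..<1}" "f ` {0<..<1} \<subseteq> Xs" "continuous_on Xs g"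
  shows "isCont (g \<circ> f) x"
proof -
  have "continuous (at x within {0<..<1}) f" using assms(1) continuous_at_imp_continuous_within by blast
  moreover have "continuous (at (f x) within f ` {0<..<1}) g"
    using assms(2-4) continuous_on_eq_continuous_within[of Xs g]
    by (meson continuous_within_subset image_subset_iff)
  ultimately have "continuous (at x within {0<..<1}) (g \<circ> f)"
    using continuous_within_compose2 by (simp add: o_def)
  then show ?thesis using at_within_open[OF assms(2) open01] by simp
qed

lemma cont_transfer:
  fixes f g :: "real \<Rightarrow> real"
  assumes "isCont f x" "x \<in> {0<..<1}" "\<And>y. y \<in> {0<..<1} \<Longrightarrow> f y = g y"
  shows "isCont g x"
proof -
  have "eventually (\<lambda>y. f y = g y) (nhds x)"
    using assms(2,3) open01 eventually_nhds by blast
  then show ?thesis using isCont_cong assms(1) by blast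
qed

lemma Cd_left:
  assumes hX: "\<And>x. x \<in> Xs \<Longrightarrow> h x \<in> Xs"
  shows "Cd (\<phi> \<circ> h) = Cd h"
proof -
  have himg: "h ` {0<..<1} \<subseteq> Xs" using hX sub01 by auto
  have "isCont (\<phi> \<circ> h) x \<longleftrightarrow> isCont h x" if x: "x \<in> {0<..<1}" for x
  proof
    assume "isCont h x" then show "isCont (\<phi> \<circ> h) x" using comp_cont[OF _ x himg cphi] by blast
  next
    assume a: "isCont (\<phi> \<circ> h) x"
    have "(\<phi> \<circ> h) ` {0<..<1} \<subseteq> Xs" using himg phiX by auto
    then have "isCont (\<psi> \<circ> (\<phi> \<circ> h)) x" using comp_cont[OF a x _ cpsi] by blast
    then show "isCont h x" by (rule cont_transfer[OF _ x]) (use himg psiphi in \<open>auto simp: image_subset_iff\<close>)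
  qed
  then show ?thesis unfolding Cd_def by auto
qed

lemma phi01: "x \<in> {0<..<1} \<Longrightarrow> \<phi> x \<in> {0<..<1}"
proof -
  assume x: "x \<in> {0<..<1}"
  have z: "0 \<in> Xs" unfolding Xs_def by auto
  have "\<phi> 0 < \<phi> x" using phi_less[of 0 x] z x sub01 by auto
  moreover have "\<phi> 0 \<in> Xs" "\<phi> x \<in> Xs" using phiX z x sub01 by auto
  ultimately show ?thesis unfolding Xs_def by auto
qed

lemma psi01: "x \<in> {0<..<1} \<Longrightarrow> \<psi> x \<in> {0<..<1}"
proof -
  assume x: "x \<in> {0<..<1}"
  have z: "0 \<in> Xs" unfolding Xs_def by auto
  have "\<psi> 0 < \<psi> x" using psi_less[of 0 x] z x sub01 by auto
  moreover have "\<psi> x \<in> Xs" using psiX z x sub01 by auto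
  ultimately show ?thesis using psi0 unfolding Xs_def by auto
qed

lemma Cd_right:
  shows "Cd (h \<circ> \<phi>) = \<psi> ` Cd h"
proof -
  have phimg: "\<phi> ` {0<..<1} \<subseteq> Xs" and psimg: "\<psi> ` {0<..<1} \<subseteq> Xs" using phi01 psi01 sub01 by auto
  have e: "isCont (h \<circ> \<phi>) x \<longleftrightarrow> isCont h (\<phi> x)" if x: "x \<in> {0<..<1}" for x
  proof
    assume "isCont h (\<phi> x)"
    moreover have "isCont \<phi> x" using isCont_XsC[OF cphi] x sub01 by auto
    ultimately show "isCont (h \<circ> \<phi>) x" by (simp add: continuous_at_compose)
  next
    assume a: "isCont (h \<circ> \<phi>) x"
    have px: "\<phi> x \<in> {0<..<1}" using phi01 x by auto
    have "isCont \<psi> (\<phi> x)" using isCont_XsC[OF cpsi] px sub01 by auto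
    moreover have "isCont (h \<circ> \<phi>) (\<psi> (\<phi> x))" using a psiphi x sub01 by auto
    ultimately have "isCont (h \<circ> \<phi> \<circ> \<psi>) (\<phi> x)" by (rule continuous_at_compose)
    then show "isCont h (\<phi> x)" by (rule cont_transfer[OF _ px]) (use sub01 phipsi in auto)
  qed
  show ?thesis
  proof (rule set_eqI, rule iffI)
    fix x assume "x \<in> Cd (h \<circ> \<phi>)"
    then have x: "x \<in> {0<..<1}" "\<not> isCont (h \<circ> \<phi>) x" unfolding Cd_def by auto
    then have "\<phi> x \<in> Cd h" using e phi01 unfolding Cd_def by auto
    moreover have "x = \<psi> (\<phi> x)" using psiphi x sub01 by auto
    ultimately show "x \<in> \<psi> ` Cd h" by blast
  next
    fix x assume "x \<in> \<psi> ` Cd h"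
    then obtain y where y: "y \<in> {0<..<1}" "\<not> isCont h y" "x = \<psi> y" unfolding Cd_def by auto
    then have "\<phi> x = y" using phipsi sub01 by auto
    then show "x \<in> Cd (h \<circ> \<phi>)" using e[of x] y psi01 unfolding Cd_def by auto
  qed
qed

end

definition dec :: "(real \<Rightarrow> real) \<Rightarrow> real set \<Rightarrow> bool" where
  "dec f S \<longleftrightarrow> (\<forall>x\<in>S. \<forall>y\<in>S. x < y \<longrightarrow> f y < f x)"

lemma R_dec: "R_hP h P = card {a\<in>P. dec h (J P a)}"
  unfolding R_hP_def dec_def J_def by (rule arg_cong[where f=card]) auto

lemma beta_J: "beta_pt h P a = Inf (h ` J P a)"
  unfolding beta_pt_def J_def by simp

context phictx
begin

lemma Inf_phi:
  assumes A: "A \<subseteq> Xs" "A \<noteq> {}"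
  shows "Inf (\<phi> ` A) = \<phi> (Inf A)"
proof -
  have bA: "bdd_below A" using A unfolding Xs_def by (intro bdd_belowI[of _ 0]) auto
  have bPA: "bdd_below (\<phi> ` A)" using A phiX unfolding Xs_def bdd_below_def by force
  obtain y0 where y0: "y0 \<in> A" using A by auto
  have IA: "Inf A \<in> Xs"
  proof -
    have "0 \<le> Inf A" using A by (intro cInf_greatest) (auto simp: Xs_def)
    moreover have "Inf A \<le> y0" using cInf_lower[OF y0 bA] .
    ultimately show ?thesis using y0 A unfolding Xs_def by auto
  qed
  have le1: "\<phi> (Inf A) \<le> Inf (\<phi> ` A)"
  proof (rule cInf_greatest)
    show "\<phi> ` A \<noteq> {}" using A by auto
    fix z assume "z \<in> \<phi> ` A"
    then obtain y where y: "y \<in> A" "z = \<phi> y" by auto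
    have "Inf A \<le> y" using cInf_lower[OF y(1) bA] .
    then show "\<phi> (Inf A) \<le> z" using phi_less[of y "Inf A"] y IA A by force
  qed
  show ?thesis
  proof (rule ccontr)
    assume "Inf (\<phi> ` A) \<noteq> \<phi> (Inf A)"
    then have lt: "\<phi> (Inf A) < Inf (\<phi> ` A)" using le1 by auto
    define L where "L = Inf (\<phi> ` A)"
    have Lle: "L \<le> \<phi> y" if "y \<in> A" for y unfolding L_def using cInf_lower[OF _ bPA] that by auto
    have "L \<in> Xs" using lt Lle[OF y0] phiX[OF IA] phiX[of y0] y0 A unfolding L_def Xs_def by auto
    then have "Inf A < \<psi> L" using psi_less[of "\<phi> (Inf A)" L] lt psiphi[OF IA] phiX[OF IA]
      unfolding L_def by auto
    then obtain y where y: "y \<in> A" "y < \<psi> L" using cInf_less_iff[OF _ bA] A by auto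
    then have "\<phi> y < L" using phi_less[of y "\<psi> L"] psiX[OF \<open>L \<in> Xs\<close>] phipsi[OF \<open>L \<in> Xs\<close>] A by auto
    then show False using Lle[OF y(1)] by auto
  qed
qed

lemma part_psi: "is_partition P \<Longrightarrow> is_partition (\<psi> ` P)"
  unfolding is_partition_def using psi0 psiX by force

lemma J_right:
  assumes P: "is_partition P" and a: "a \<in> P"
  shows "\<phi> ` J (\<psi> ` P) (\<psi> a) = J P a"
proof -
  have fP: "finite P" "P \<subseteq> Xs" using P unfolding is_partition_def by auto
  have fP': "finite (\<psi> ` P)" "\<psi> ` P \<subseteq> Xs" using fP psiX by auto
  have aX: "a \<in> Xs" using a fP by auto
  have key: "y \<in> J (\<psi> ` P) (\<psi> a) \<longleftrightarrow> \<phi> y \<in> J P a" if y: "y \<in> Xs" for y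
  proof -
    have "y \<in> J (\<psi> ` P) (\<psi> a) \<longleftrightarrow> (\<psi> a < y \<and> y < 1 \<and> (\<forall>p\<in>P. \<psi> a < \<psi> p \<longrightarrow> y < \<psi> p))"
      using nxt_char[OF fP'] by auto
    also have "\<dots> \<longleftrightarrow> (a < \<phi> y \<and> \<phi> y < 1 \<and> (\<forall>p\<in>P. a < p \<longrightarrow> \<phi> y < p))"
    proof -
      have "\<psi> a < y \<longleftrightarrow> a < \<phi> y" using phi_less[of "\<psi> a" y] phipsi[OF aX] psiX[OF aX] y by auto
      moreover have "y < 1" "\<phi> y < 1" using y phiX[OF y] unfolding Xs_def by auto
      moreover have "\<forall>p\<in>P. (\<psi> a < \<psi> p \<longleftrightarrow> a < p) \<and> (y < \<psi> p \<longleftrightarrow> \<phi> y < p)"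
        using fP aX y psi_less phi_less psiX phipsi by (metis subsetD)
      ultimately show ?thesis by auto
    qed
    also have "\<dots> \<longleftrightarrow> \<phi> y \<in> J P a" using nxt_char[OF fP] by auto
    finally show ?thesis .
  qed
  have JX: "J (\<psi> ` P) (\<psi> a) \<subseteq> Xs" using J_sub[OF part_psi[OF P]] a by auto
  have JX2: "J P a \<subseteq> Xs" using J_sub[OF P a] .
  show ?thesis
  proof (rule set_eqI, rule iffI)
    fix z assume "z \<in> \<phi> ` J (\<psi> ` P) (\<psi> a)"
    then show "z \<in> J P a" using key JX by auto
  next
    fix z assume z: "z \<in> J P a"
    then have "z \<in> Xs" using JX2 by auto
    then have "\<psi> z \<in> J (\<psi> ` P) (\<psi> a)" "\<phi> (\<psi> z) = z" using key[of "\<psi> z"] psiX phipsi z by auto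
    then show "z \<in> \<phi> ` J (\<psi> ` P) (\<psi> a)" by (metis image_eqI)
  qed
qed

lemma dec_right: "S \<subseteq> Xs \<Longrightarrow> dec (h \<circ> \<phi>) S \<longleftrightarrow> dec h (\<phi> ` S)"
  unfolding dec_def using phi_less by (auto simp: subset_iff)

lemma dec_left: "(\<And>x. x \<in> S \<Longrightarrow> h x \<in> Xs) \<Longrightarrow> dec (\<phi> \<circ> h) S \<longleftrightarrow> dec h S"
  unfolding dec_def using phi_less by auto

end

context phictx
begin

lemma the_h:
  assumes hinj: "inj_on h Xs" and P: "P \<subseteq> Xs" and a: "a \<in> P"
  shows "(THE b. b \<in> P \<and> h b = h a) = a"
  using a P hinj by (intro the_equality) (auto dest: inj_onD)

lemma sigma_right:
  assumes P: "is_partition P" and hinj: "inj_on h Xs"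
  shows "sigma_hP (h \<circ> \<phi>) (\<psi> ` P) = sigma_hP h P"
proof
  fix x
  have PX: "P \<subseteq> Xs" using P unfolding is_partition_def by auto
  have im: "(h \<circ> \<phi>) ` (\<psi> ` P) = h ` P" using PX phipsi by (force simp: image_comp)
  show "sigma_hP (h \<circ> \<phi>) (\<psi> ` P) x = sigma_hP h P x"
  proof (cases "x \<in> h ` P")
    case False then show ?thesis unfolding sigma_hP_def im by simp
  next
    case True
    then obtain a where a: "a \<in> P" "x = h a" by auto
    have aX: "a \<in> Xs" using a PX by auto
    have t1: "(THE b. b \<in> P \<and> h b = x) = a" using the_h[OF hinj PX a(1)] a by simp
    have t2: "(THE b. b \<in> \<psi> ` P \<and> (h \<circ> \<phi>) b = x) = \<psi> a"
    proof (rule the_equality)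
      show "\<psi> a \<in> \<psi> ` P \<and> (h \<circ> \<phi>) (\<psi> a) = x" using a aX phipsi by auto
      fix b assume "b \<in> \<psi> ` P \<and> (h \<circ> \<phi>) b = x"
      then obtain p where p: "p \<in> P" "b = \<psi> p" "h p = h a" using phipsi PX a by auto
      then have "p = a" using hinj PX a(1) by (auto dest: inj_onD)
      then show "b = \<psi> a" using p by simp
    qed
    have "beta_pt (h \<circ> \<phi>) (\<psi> ` P) (\<psi> a) = beta_pt h P a"
    proof -
      have "(h \<circ> \<phi>) ` J (\<psi> ` P) (\<psi> a) = h ` J P a" using J_right[OF P a(1)] by (metis image_comp)
      then show ?thesis unfolding beta_J by (rule arg_cong[where f=Inf])
    qed
    then show ?thesis unfolding sigma_hP_def im t1 t2 using True by simp
  qed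
qed

lemma R_right:
  assumes P: "is_partition P"
  shows "R_hP (h \<circ> \<phi>) (\<psi> ` P) = R_hP h P"
proof -
  have PX: "P \<subseteq> Xs" using P unfolding is_partition_def by auto
  have inj: "inj_on \<psi> Xs" by (metis inj_onI phipsi)
  have "{a\<in>\<psi> ` P. dec (h \<circ> \<phi>) (J (\<psi> ` P) a)} = \<psi> ` {a\<in>P. dec h (J P a)}"
  proof -
    have "dec (h \<circ> \<phi>) (J (\<psi> ` P) (\<psi> a)) \<longleftrightarrow> dec h (J P a)" if "a \<in> P" for a
      using dec_right[OF J_sub[OF part_psi[OF P]]] J_right[OF P that] that by auto
    then show ?thesis by auto
  qed
  moreover have "inj_on \<psi> {a\<in>P. dec h (J P a)}" using PX by (intro inj_on_subset[OF inj]) auto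
  ultimately show ?thesis unfolding R_dec by (simp add: card_image)
qed

lemma eps_right:
  assumes "is_partition P" "inj_on h Xs"
  shows "eps_hP (h \<circ> \<phi>) (\<psi> ` P) = eps_hP h P"
  unfolding eps_hP_def using R_right[OF assms(1)] sigma_right[OF assms] by simp

definition g :: "real \<Rightarrow> real" where "g x = (if x \<in> Xs then \<phi> x else x)"

lemma bij_g: "bij g"
proof (rule bijI)
  show "inj g"
  proof (rule injI)
    fix x y assume "g x = g y"
    then show "x = y" unfolding g_def using phiX psiphi by (metis)
  qed
  show "surj g"
  proof (rule surjI)
    fix y
    show "g (if y \<in> Xs then \<psi> y else y) = y" unfolding g_def using psiX phipsi by auto
  qed
qed

lemma sigma_left:
  assumes P: "is_partition P" and hX: "\<And>x. x \<in> Xs \<Longrightarrow> h x \<in> Xs" and hinj: "inj_on h Xs"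
  shows "sigma_hP (\<phi> \<circ> h) P \<circ> g = g \<circ> sigma_hP h P"
proof
  fix x
  have PX: "P \<subseteq> Xs" using P unfolding is_partition_def by auto
  have hPX: "h ` P \<subseteq> Xs" using hX PX by auto
  show "(sigma_hP (\<phi> \<circ> h) P \<circ> g) x = (g \<circ> sigma_hP h P) x"
  proof (cases "x \<in> Xs")
    case False
    then have "x \<notin> h ` P" "x \<notin> (\<phi> \<circ> h) ` P" using hPX phiX by auto
    then show ?thesis using False unfolding sigma_hP_def g_def by simp
  next
    case xX: True
    show ?thesis
    proof (cases "x \<in> h ` P")
      case False
      have "\<phi> x \<notin> (\<phi> \<circ> h) ` P"
      proof
        assume "\<phi> x \<in> (\<phi> \<circ> h) ` P"
        then obtain p where p: "p \<in> P" "\<phi> x = \<phi> (h p)" by auto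
        then have "h p \<in> Xs" using hPX by auto
        then have "x = h p" using p psiphi xX by metis
        then show False using False p by auto
      qed
      then show ?thesis using False xX unfolding sigma_hP_def g_def by simp
    next
      case True
      then obtain a where a: "a \<in> P" "x = h a" by auto
      have t1: "(THE b. b \<in> P \<and> h b = x) = a" using the_h[OF hinj PX a(1)] a by simp
      have inj2: "inj_on (\<phi> \<circ> h) Xs" using hinj hX psiphi by (intro inj_onI) (metis comp_apply inj_onD)
      have t2: "(THE b. b \<in> P \<and> (\<phi> \<circ> h) b = \<phi> x) = a"
        using the_h[OF inj2 PX a(1)] a by simp
      have JX: "J P a \<subseteq> Xs" "J P a \<noteq> {}" using J_sub[OF P a(1)] J_ne[OF P a(1)] by auto
      have hJ: "h ` J P a \<subseteq> Xs" "h ` J P a \<noteq> {}" using JX hX by auto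
      have bX: "beta_pt h P a \<in> Xs"
      proof -
        obtain y where y: "y \<in> h ` J P a" using hJ by auto
        have bd: "bdd_below (h ` J P a)" using hJ unfolding Xs_def by (intro bdd_belowI[of _ 0]) auto
        have "0 \<le> Inf (h ` J P a)" using hJ by (intro cInf_greatest) (auto simp: Xs_def)
        moreover have "Inf (h ` J P a) \<le> y" using cInf_lower[OF y bd] .
        ultimately show ?thesis using y hJ unfolding beta_J Xs_def by auto
      qed
      have "beta_pt (\<phi> \<circ> h) P a = \<phi> (beta_pt h P a)"
      proof -
        have "(\<phi> \<circ> h) ` J P a = \<phi> ` (h ` J P a)" by (metis image_comp)
        then show ?thesis unfolding beta_J using Inf_phi[OF hJ] by simp
      qed
      moreover have "\<phi> x \<in> (\<phi> \<circ> h) ` P" using a by auto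
      ultimately show ?thesis using True xX bX t1 t2 unfolding sigma_hP_def g_def by simp
    qed
  qed
qed

lemma eps_left:
  assumes P: "is_partition P" and hX: "\<And>x. x \<in> Xs \<Longrightarrow> h x \<in> Xs" and hinj: "inj_on h Xs"
  shows "eps_hP (\<phi> \<circ> h) P = eps_hP h P"
proof -
  have "R_hP (\<phi> \<circ> h) P = R_hP h P"
  proof -
    have "dec (\<phi> \<circ> h) (J P a) \<longleftrightarrow> dec h (J P a)" if "a \<in> P" for a
      using dec_left[of "J P a" h] J_sub[OF P that] hX by auto
    then show ?thesis unfolding R_dec by (metis (no_types, lifting) Collect_cong)
  qed
  moreover have "evenperm (sigma_hP (\<phi> \<circ> h) P) = evenperm (sigma_hP h P)"
    using evenperm_conj[OF bij_g sigma_left[OF assms]] .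
  ultimately show ?thesis unfolding eps_hP_def sgn2_def by simp
qed

end

theorem lemma3p7:
  fixes h \<phi> :: "real \<Rightarrow> real"
  assumes "PCbow h"
    and "\<exists>\<psi>. homeomorphism Xs Xs \<phi> \<psi>"
    and "strict_mono_on Xs \<phi>"
  shows "eps (h \<circ> \<phi>) = eps h \<and> eps h = eps (\<phi> \<circ> h)"
proof -
  obtain \<psi> where hom: "homeomorphism Xs Xs \<phi> \<psi>" using assms(2) by auto
  interpret phictx \<phi> \<psi> using hom assms(3) by unfold_locales
  have hX: "\<And>x. x \<in> Xs \<Longrightarrow> h x \<in> Xs" and hinj: "inj_on h Xs"
    using assms(1) unfolding PCbow_def bij_betw_def by auto
  have fin: "finite (Cd h)" using PC_finite[OF assms(1)] .
  define P where "P = insert 0 (Cd h)"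
  have Ph: "Pmin h = P" unfolding P_def using Pmin_char[OF fin] .
  have part: "is_partition P" unfolding P_def is_partition_def using fin by (auto simp: Cd_def Xs_def)
  have "Pmin (h \<circ> \<phi>) = insert 0 (\<psi> ` Cd h)"
    using Pmin_char[of "h \<circ> \<phi>"] Cd_right[of h] fin by simp
  also have "\<dots> = \<psi> ` P" unfolding P_def using psi0 by simp
  finally have P1: "Pmin (h \<circ> \<phi>) = \<psi> ` P" .
  have P2: "Pmin (\<phi> \<circ> h) = P" using Pmin_char[of "\<phi> \<circ> h"] Cd_left[OF hX] fin Ph Pmin_char[OF fin]
    unfolding P_def by simp
  show ?thesis unfolding eps_def P1 P2 Ph
    using eps_right[OF part hinj] eps_left[OF part hX hinj] by simp
qed


end
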